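(* Let $I\subseteq\mathbb{R}$ be an interval and $\mathscr{M}$ a mean on $I$. Then $\mathscr{M}$ is of type $\mathcal{T}_1^+$ if and only if $\mathscr{M}$ is a quasi-arithmetic mean on $I$, i.e. there is a continuous strictly monotone $f\colon I\to\mathbb{R}$ with $\mathscr{M}(x_1,\dots,x_n)=f^{-1}\big(\frac{f(x_1)+\cdots+f(x_n)}{n}\big)$ for all $n\in\mathbb{N}$ and $x_1,\dots,x_n\in I$.
   Context: A mean on an interval $I$ is a function $\mathscr{M}\colon\bigcup_{n=1}^\infty I^n\to I$ with $\min(a)\le\mathscr{M}(a)\le\max(a)$ for every $a$. For a commutative semigroup $(Y,+)$ and $F\colon I\to Y$, let $\omega F(I):=\bigcup_{n=1}^\infty\{F(x_1)+\cdots+F(x_n): x_i\in I\}$, and for $G\colon\omega F(I)\to I$ define $\mathscr{L}_{F,G}(a_1,\dots,a_n):=G(F(a_1)+\cdots+F(a_n))$. A mean $\mathscr{M}$ on $I$ is of type $\mathcal{T}_k^+$ ($k\in\mathbb{N}$) if $\mathscr{M}=\mathscr{L}_{F,G}$ for some continuous $F\colon I\to(\mathbb{R}^k\times\mathbb{Z},+)$ and some continuous $G\colon\omega F(I)\to I$ (with $\mathbb{Z}$ discrete, product topology on $\mathbb{R}^k\times\mathbb{Z}$, subspace topology on $\omega F(I)$). *)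

theory Defs
  imports "HOL-Analysis.Analysis"
begin

definition is_mean :: "real set \<Rightarrow> (real list \<Rightarrow> real) \<Rightarrow> bool" where
  "is_mean I M \<longleftrightarrow> (\<forall>xs. xs \<noteq> [] \<and> set xs \<subseteq> I \<longrightarrow>
      Min (set xs) \<le> M xs \<and> M xs \<le> Max (set xs))"

definition omegaF :: "(real \<Rightarrow> 'b::monoid_add) \<Rightarrow> real set \<Rightarrow> 'b set" where
  "omegaF F I = {sum_list (map F xs) | xs. xs \<noteq> [] \<and> set xs \<subseteq> I}"

text \<open>The type int carries the discrete topology, real \<times> int the product topology.\<close>
definition type_T1plus :: "real set \<Rightarrow> (real list \<Rightarrow> real) \<Rightarrow> bool" where
  "type_T1plus I M \<longleftrightarrow> (\<exists>(F :: real \<Rightarrow> real \<times> int) (G :: real \<times> int \<Rightarrow> real).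
      continuous_on I F \<and> continuous_on (omegaF F I) G \<and> G ` omegaF F I \<subseteq> I \<and>
      (\<forall>xs. xs \<noteq> [] \<and> set xs \<subseteq> I \<longrightarrow> M xs = G (sum_list (map F xs))))"

definition quasi_arithmetic :: "real set \<Rightarrow> (real list \<Rightarrow> real) \<Rightarrow> bool" where
  "quasi_arithmetic I M \<longleftrightarrow> (\<exists>f :: real \<Rightarrow> real.
      continuous_on I f \<and> (strict_mono_on I f \<or> strict_antimono_on I f) \<and>
      (\<forall>xs. xs \<noteq> [] \<and> set xs \<subseteq> I \<longrightarrow>
         M xs = the_inv_into I f (sum_list (map f xs) / real (length xs))))"

end

theory Submission
  imports Defs
begin

lemma fst_sum_list_map: "fst (sum_list (map F xs)) = sum_list (map (\<lambda>x. fst (F x)) xs)"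
  by (induction xs) auto

lemma snd_sum_list_map: "snd (sum_list (map F xs)) = sum_list (map (\<lambda>x. snd (F x)) xs)"
  by (induction xs) auto

lemma avg_in_interval:
  fixes J :: "real set"
  assumes J: "is_interval J" and ne: "xs \<noteq> []" and sub: "\<forall>x\<in>set xs. f x \<in> J"
  shows "sum_list (map f xs) / real (length xs) \<in> J"
proof -
  let ?S = "f ` set xs"
  have fin: "finite ?S" and nS: "?S \<noteq> {}" using ne by auto
  have "Min ?S \<in> ?S" "Max ?S \<in> ?S" using fin nS by (rule Min_in, rule Max_in)
  hence mn: "Min ?S \<in> J" and mx: "Max ?S \<in> J" using sub by auto
  have "sum_list (map (\<lambda>_. Min ?S) xs) \<le> sum_list (map f xs)"
    by (rule sum_list_mono) (simp add: fin)
  hence l: "real (length xs) * Min ?S \<le> sum_list (map f xs)"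
    by (simp add: sum_list_triv)
  have "sum_list (map f xs) \<le> sum_list (map (\<lambda>_. Max ?S) xs)"
    by (rule sum_list_mono) (simp add: fin)
  hence u: "sum_list (map f xs) \<le> real (length xs) * Max ?S"
    by (simp add: sum_list_triv)
  have pos: "real (length xs) > 0" using ne by simp
  have "Min ?S \<le> sum_list (map f xs) / real (length xs)"
    using l pos by (simp add: field_simps)
  moreover have "sum_list (map f xs) / real (length xs) \<le> Max ?S"
    using u pos by (simp add: field_simps)
  ultimately show ?thesis using J mn mx unfolding is_interval_1 by blast
qed

lemma mean_const:
  assumes "is_mean I M" "y \<in> I" "n > 0"
  shows "M (replicate n y) = y"
proof -
  have "replicate n y \<noteq> []" "set (replicate n y) \<subseteq> I" using assms by auto
  moreover have "set (replicate n y) = {y}" using assms by auto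
  ultimately show ?thesis using assms(1) unfolding is_mean_def
    by (metis Max_singleton Min_singleton order_antisym)
qed

theorem proposition3p2:
  fixes I :: "real set" and M :: "real list \<Rightarrow> real"
  assumes "is_interval I" and "is_mean I M"
  shows "type_T1plus I M \<longleftrightarrow> quasi_arithmetic I M"
proof
  assume "type_T1plus I M"
  then obtain F :: "real \<Rightarrow> real \<times> int" and G where
    cF: "continuous_on I F" and MG: "\<forall>xs. xs \<noteq> [] \<and> set xs \<subseteq> I \<longrightarrow> M xs = G (sum_list (map F xs))"
    unfolding type_T1plus_def by blast
  define \<phi> where "\<phi> = (\<lambda>x. fst (F x))"
  have conn: "connected I" using assms(1) is_interval_connected by blast
  have cphi: "continuous_on I \<phi>" unfolding \<phi>_def by (intro continuous_intros cF)
  have ck: "continuous_on I (\<lambda>x. real_of_int (snd (F x)))"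
    by (intro continuous_intros cF)
  have "(\<lambda>x. real_of_int (snd (F x))) constant_on I"
  proof (rule continuous_discrete_range_constant[OF conn ck])
    fix x assume "x \<in> I"
    show "\<exists>e>0. \<forall>y. y \<in> I \<and> real_of_int (snd (F y)) \<noteq> real_of_int (snd (F x)) \<longrightarrow>
            e \<le> norm (real_of_int (snd (F y)) - real_of_int (snd (F x)))"
      by (rule exI[of _ 1]) (auto simp: of_int_diff[symmetric] simp del: of_int_diff)
  qed
  then have kc: "\<And>x y. x \<in> I \<Longrightarrow> y \<in> I \<Longrightarrow> snd (F x) = snd (F y)"
    unfolding constant_on_def by (metis of_int_eq_iff)
  have GF: "G (F x) = x" if "x \<in> I" for x
  proof -
    have "M [x] = G (F x)" using MG that by auto
    moreover have "M [x] = x" using mean_const[OF assms(2) that, of 1] by simp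
    ultimately show ?thesis by simp
  qed
  have inj: "inj_on \<phi> I"
  proof (rule inj_onI)
    fix x y assume "x \<in> I" "y \<in> I" "\<phi> x = \<phi> y"
    moreover have "snd (F x) = snd (F y)" using kc \<open>x \<in> I\<close> \<open>y \<in> I\<close> by blast
    ultimately have "F x = F y" unfolding \<phi>_def using prod_eqI by blast
    then have "G (F x) = G (F y)" by simp
    then show "x = y" using GF[OF \<open>x \<in> I\<close>] GF[OF \<open>y \<in> I\<close>] by simp
  qed
  have mono: "strict_mono_on I \<phi> \<or> strict_antimono_on I \<phi>"
    using injective_eq_monotone_map[OF assms(1) cphi] inj by blast
  have Jint: "is_interval (\<phi> ` I)"
    using connected_continuous_image[OF cphi conn] is_interval_connected_1 by blast
  have "\<forall>xs. xs \<noteq> [] \<and> set xs \<subseteq> I \<longrightarrow>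
         M xs = the_inv_into I \<phi> (sum_list (map \<phi> xs) / real (length xs))"
  proof (intro allI impI)
    fix xs assume xs: "xs \<noteq> [] \<and> set xs \<subseteq> I"
    let ?n = "length xs"
    have "sum_list (map \<phi> xs) / real ?n \<in> \<phi> ` I"
      using avg_in_interval[OF Jint, of xs \<phi>] xs by auto
    then obtain y where y: "y \<in> I" "\<phi> y = sum_list (map \<phi> xs) / real ?n" by auto
    have npos: "?n > 0" using xs by simp
    have s1: "sum_list (map \<phi> xs) = sum_list (map \<phi> (replicate ?n y))"
    proof -
      have "sum_list (map \<phi> (replicate ?n y)) = real ?n * \<phi> y"
        by (simp add: sum_list_replicate)
      also have "\<dots> = sum_list (map \<phi> xs)"
        unfolding y(2) using npos by simp
      finally show ?thesis by simp
    qed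
    have s2: "sum_list (map (\<lambda>x. snd (F x)) xs) = sum_list (map (\<lambda>x. snd (F x)) (replicate ?n y))"
    proof -
      have "sum_list (map (\<lambda>x. snd (F x)) xs) = sum_list (map (\<lambda>_. snd (F y)) xs)"
      proof (rule arg_cong[where f=sum_list], rule map_cong[OF refl])
        fix x assume "x \<in> set xs"
        then have "x \<in> I" using xs by blast
        then show "snd (F x) = snd (F y)" using kc[of x y] y(1) by blast
      qed
      then show ?thesis by (simp add: sum_list_triv sum_list_replicate)
    qed
    have "sum_list (map F xs) = sum_list (map F (replicate ?n y))"
    proof (rule prod_eqI)
      show "fst (sum_list (map F xs)) = fst (sum_list (map F (replicate ?n y)))"
        unfolding fst_sum_list_map using s1 unfolding \<phi>_def by assumption
      show "snd (sum_list (map F xs)) = snd (sum_list (map F (replicate ?n y)))"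
        unfolding snd_sum_list_map using s2 by assumption
    qed
    then have "M xs = M (replicate ?n y)"
      using MG xs y npos by (metis length_0_conv length_replicate set_replicate empty_subsetI insert_subset)
    also have "\<dots> = y" using mean_const[OF assms(2) y(1) npos] .
    also have "\<dots> = the_inv_into I \<phi> (\<phi> y)" using the_inv_into_f_f[OF inj y(1)] by simp
    finally show "M xs = the_inv_into I \<phi> (sum_list (map \<phi> xs) / real (length xs))"
      using y by simp
  qed
  then show "quasi_arithmetic I M"
    unfolding quasi_arithmetic_def using cphi mono by blast
next
  assume "quasi_arithmetic I M"
  then obtain f where cf: "continuous_on I f" and mono: "strict_mono_on I f \<or> strict_antimono_on I f"
    and Mf: "\<forall>xs. xs \<noteq> [] \<and> set xs \<subseteq> I \<longrightarrow>
         M xs = the_inv_into I f (sum_list (map f xs) / real (length xs))"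
    unfolding quasi_arithmetic_def by blast
  have inj: "inj_on f I"
    using mono by (metis injective_eq_monotone_map[OF assms(1) cf])
  define F :: "real \<Rightarrow> real \<times> int" where "F = (\<lambda>x. (f x, 1))"
  define h :: "real \<times> int \<Rightarrow> real" where "h = (\<lambda>p. fst p / real_of_int (snd p))"
  define G where "G = (\<lambda>p. the_inv_into I f (h p))"
  have sumF: "sum_list (map F xs) = (sum_list (map f xs), int (length xs))" for xs
    unfolding F_def by (induction xs) (auto simp: zero_prod_def)
  have om: "\<exists>xs. xs \<noteq> [] \<and> set xs \<subseteq> I \<and> p = (sum_list (map f xs), int (length xs))"
    if "p \<in> omegaF F I" for p
    using that unfolding omegaF_def by (auto simp: sumF)
  have conn: "connected I" using assms(1) is_interval_connected by blast
  have Jint: "is_interval (f ` I)"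
    using connected_continuous_image[OF cf conn] is_interval_connected_1 by blast
  have hin: "h p \<in> f ` I" if p_in: "p \<in> omegaF F I" for p
  proof -
    obtain xs where xs: "xs \<noteq> []" "set xs \<subseteq> I" "p = (sum_list (map f xs), int (length xs))"
      using om[OF p_in] by blast
    show ?thesis using avg_in_interval[OF Jint xs(1), of f] xs unfolding h_def by auto
  qed
  have ch: "continuous_on (omegaF F I) h"
    unfolding h_def
  proof (rule continuous_on_divide)
    show "continuous_on (omegaF F I) (\<lambda>p. fst p)" by (intro continuous_intros)
    show "continuous_on (omegaF F I) (\<lambda>p. real_of_int (snd p))" by (intro continuous_intros)
    show "\<forall>p\<in>omegaF F I. real_of_int (snd p) \<noteq> 0"
    proof
      fix p assume "p \<in> omegaF F I"
      then obtain xs where xs: "xs \<noteq> []" "p = (sum_list (map f xs), int (length xs))"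
        using om by blast
      then show "real_of_int (snd p) \<noteq> 0" by simp
    qed
  qed
  have pc: "path_connected I" using assms(1) is_interval_path_connected by blast
  obtain g where hom: "homeomorphism I (f ` I) f g"
    using injective_into_1d_eq_homeomorphism[OF cf pc] inj by blast
  have cg: "continuous_on (f ` I) g" and gf: "\<And>x. x \<in> I \<Longrightarrow> g (f x) = x"
    using hom unfolding homeomorphism_def by auto
  have cinv: "continuous_on (f ` I) (the_inv_into I f)"
    by (rule continuous_on_cong[THEN iffD1, OF refl _ cg]) (auto simp: gf the_inv_into_f_f[OF inj])
  have cG: "continuous_on (omegaF F I) G"
    unfolding G_def by (rule continuous_on_compose2[OF cinv ch]) (use hin in auto)
  have GI: "G ` omegaF F I \<subseteq> I"
    unfolding G_def using hin the_inv_into_into[OF inj] by blast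
  have cF: "continuous_on I F" unfolding F_def by (intro continuous_intros cf)
  have "\<forall>xs. xs \<noteq> [] \<and> set xs \<subseteq> I \<longrightarrow> M xs = G (sum_list (map F xs))"
    using Mf by (simp add: G_def h_def sumF)
  then show "type_T1plus I M"
    unfolding type_T1plus_def using cF cG GI by blast
qed

end
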